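(* Let $A$ be a distributive meet-complemented lattice in which $\Box x$ and $\Diamond x$ exist for every $x\in A$ and such that $\Box a\le\Box\Box a$ for all $a\in A$. Then for all $a,b\in A$: (i) $\Box(a\wedge\Diamond b)=\Box a\wedge\Diamond b$; (ii) $\Diamond(a\vee\Box b)=\Diamond a\vee\Box b$; (iii) $\Box(a\vee\Box b)=\Box a\vee\Box b$; (iv) $\Diamond(a\wedge\Diamond b)=\Diamond a\wedge\Diamond b$.
   Context: A meet-complemented lattice is a lattice $(L,\le)$ such that for every $a\in L$ the element $\neg a=\max\{b\in L: a\wedge b\le c\ \text{for all } c\in L\}$ exists; it is bounded with bottom $0$ and top $1$. For $a\in L$, $\Box a=\max\{b\in L: a\vee\neg b=1\}$ and $\Diamond a=\min\{b\in L: \neg a\vee b=1\}$. *)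

theory Defs
  imports Main
begin

definition has_max :: "('a::order \<Rightarrow> bool) \<Rightarrow> bool" where
  "has_max P \<longleftrightarrow> (\<exists>x. P x \<and> (\<forall>y. P y \<longrightarrow> y \<le> x))"

definition has_min :: "('a::order \<Rightarrow> bool) \<Rightarrow> bool" where
  "has_min P \<longleftrightarrow> (\<exists>x. P x \<and> (\<forall>y. P y \<longrightarrow> x \<le> y))"

definition mc_neg :: "'a::bounded_lattice \<Rightarrow> 'a" where
  "mc_neg a = (GREATEST b. \<forall>c. inf a b \<le> c)"

definition mc_box :: "'a::bounded_lattice \<Rightarrow> 'a" where
  "mc_box a = (GREATEST b. sup a (mc_neg b) = top)"

definition mc_dia :: "'a::bounded_lattice \<Rightarrow> 'a" where
  "mc_dia a = (LEAST b. sup (mc_neg a) b = top)"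

end

theory Submission
  imports Defs
begin

theorem proposition24:
  assumes mc: "\<forall>a::'a::{distrib_lattice,bounded_lattice}. has_max (\<lambda>b. \<forall>c. inf a b \<le> c)"
    and box_ex: "\<forall>a::'a. has_max (\<lambda>b. sup a (mc_neg b) = top)"
    and dia_ex: "\<forall>a::'a. has_min (\<lambda>b. sup (mc_neg a) b = top)"
    and S4: "\<forall>a::'a. mc_box a \<le> mc_box (mc_box a)"
  shows "(\<forall>a b::'a. mc_box (inf a (mc_dia b)) = inf (mc_box a) (mc_dia b))
       \<and> (\<forall>a b::'a. mc_dia (sup a (mc_box b)) = sup (mc_dia a) (mc_box b))
       \<and> (\<forall>a b::'a. mc_box (sup a (mc_box b)) = sup (mc_box a) (mc_box b))
       \<and> (\<forall>a b::'a. mc_dia (inf a (mc_dia b)) = inf (mc_dia a) (mc_dia b))"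
proof -
  have negI: "\<forall>c. inf a (mc_neg a) \<le> c" for a :: 'a
  proof -
    obtain x where x: "\<forall>c. inf a x \<le> c" "\<forall>y. (\<forall>c. inf a y \<le> c) \<longrightarrow> y \<le> x"
      using mc unfolding has_max_def by blast
    have "mc_neg a = x" unfolding mc_neg_def
      by (rule Greatest_equality) (use x in auto)
    thus ?thesis using x by simp
  qed
  have neg0: "inf a (mc_neg a) = bot" for a :: 'a using spec[OF negI[of a], of bot] by (simp add: bot_unique)
  have negle: "inf a b = bot \<Longrightarrow> b \<le> mc_neg a" for a b :: 'a
  proof -
    assume h: "inf a b = bot"
    obtain x where x: "\<forall>c. inf a x \<le> c" "\<forall>y. (\<forall>c. inf a y \<le> c) \<longrightarrow> y \<le> x"
      using mc unfolding has_max_def by blast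
    have "mc_neg a = x" unfolding mc_neg_def
      by (rule Greatest_equality) (use x in auto)
    thus ?thesis using x h by simp
  qed
  have negmono: "b \<le> a \<Longrightarrow> mc_neg a \<le> mc_neg b" for a b :: 'a
  proof -
    assume "b \<le> a"
    hence "inf b (mc_neg a) \<le> inf a (mc_neg a)" by (rule inf_mono) simp
    thus ?thesis using neg0[of a] by (intro negle) (simp add: bot_unique)
  qed
  have box_iff: "b \<le> mc_box a \<longleftrightarrow> sup a (mc_neg b) = top" for a b :: 'a
  proof -
    obtain x where x: "sup a (mc_neg x) = top" "\<forall>y. sup a (mc_neg y) = top \<longrightarrow> y \<le> x"
      using box_ex unfolding has_max_def by blast
    have e: "mc_box a = x" unfolding mc_box_def
      by (rule Greatest_equality) (use x in auto)
    show ?thesis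
    proof
      assume "b \<le> mc_box a"
      hence "mc_neg x \<le> mc_neg b" using e negmono by simp
      hence "sup a (mc_neg x) \<le> sup a (mc_neg b)" by (simp add: sup.coboundedI2)
      thus "sup a (mc_neg b) = top" using x(1) by (simp add: top_unique)
    qed (use x e in auto)
  qed
  have dia_iff: "mc_dia a \<le> b \<longleftrightarrow> sup (mc_neg a) b = top" for a b :: 'a
  proof -
    obtain x where x: "sup (mc_neg a) x = top" "\<forall>y. sup (mc_neg a) y = top \<longrightarrow> x \<le> y"
      using dia_ex unfolding has_min_def by blast
    have e: "mc_dia a = x" unfolding mc_dia_def
      by (rule Least_equality) (use x in auto)
    show ?thesis
    proof
      assume "mc_dia a \<le> b"
      hence "sup (mc_neg a) x \<le> sup (mc_neg a) b" using e by (simp add: sup.coboundedI2)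
      thus "sup (mc_neg a) b = top" using x(1) by (simp add: top_unique)
    qed (use x e in auto)
  qed
  have adj: "mc_dia b \<le> a \<longleftrightarrow> b \<le> mc_box a" for a b :: 'a
    using box_iff dia_iff by (simp add: sup_commute)
  have box_le: "mc_box a \<le> a" for a :: 'a
  proof -
    have "sup a (mc_neg (mc_box a)) = top" using box_iff by blast
    hence "mc_box a = inf (mc_box a) (sup a (mc_neg (mc_box a)))" by simp
    also have "\<dots> = sup (inf (mc_box a) a) (inf (mc_box a) (mc_neg (mc_box a)))"
      by (rule inf_sup_distrib1)
    also have "\<dots> = inf (mc_box a) a" using neg0 by simp
    finally show ?thesis by (rule inf.orderI)
  qed
  have dia_ge: "a \<le> mc_dia a" for a :: 'a
    using adj[of a "mc_dia a"] box_le[of "mc_dia a"] by auto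
  have box_mono: "a \<le> b \<Longrightarrow> mc_box a \<le> mc_box b" for a b :: 'a
  proof -
    assume "a \<le> b"
    have "mc_dia (mc_box a) \<le> a" using adj[of "mc_box a" a] by simp
    hence "mc_dia (mc_box a) \<le> b" using \<open>a \<le> b\<close> by simp
    thus ?thesis using adj by simp
  qed
  have dia_mono: "a \<le> b \<Longrightarrow> mc_dia a \<le> mc_dia b" for a b :: 'a
  proof -
    assume "a \<le> b"
    have "b \<le> mc_box (mc_dia b)" using adj[of b "mc_dia b"] by simp
    hence "a \<le> mc_box (mc_dia b)" using \<open>a \<le> b\<close> by simp
    thus ?thesis using adj by simp
  qed
  have box_inf: "mc_box (inf a b) = inf (mc_box a) (mc_box b)" for a b :: 'a
    apply (rule order.antisym)
     apply (simp add: box_mono)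
    using adj[of "inf (mc_box a) (mc_box b)" "inf a b"] adj[of "inf (mc_box a) (mc_box b)" a]
      adj[of "inf (mc_box a) (mc_box b)" b] by simp
  have dia_sup: "mc_dia (sup a b) = sup (mc_dia a) (mc_dia b)" for a b :: 'a
    apply (rule order.antisym)
    using adj[of "sup a b" "sup (mc_dia a) (mc_dia b)"] adj[of a "sup (mc_dia a) (mc_dia b)"]
      adj[of b "sup (mc_dia a) (mc_dia b)"] apply simp
    by (simp add: dia_mono)
  define C where "C c \<longleftrightarrow> sup c (mc_neg c) = top" for c :: 'a
  have Cbox: "C (mc_box a)" for a
    using S4 box_iff unfolding C_def by blast
  have Cdia: "C (mc_dia a)" for a
  proof -
    have "mc_box (mc_box x) = mc_box x" for x :: 'a by (rule order.antisym) (use S4 box_le[of "mc_box x"] in auto)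
    hence "a \<le> mc_box (mc_box (mc_dia a))" using adj[of a "mc_dia a"] by simp
    hence "mc_dia a \<le> mc_box (mc_dia a)" using adj[of a "mc_box (mc_dia a)"] by simp
    hence "mc_dia (mc_dia a) \<le> mc_dia a" using adj[of "mc_dia a" "mc_dia a"] by simp
    thus ?thesis using dia_iff unfolding C_def by (simp add: sup_commute)
  qed
  have Cbox_id: "C c \<Longrightarrow> mc_box c = c" for c
    using box_iff[of c c] box_le[of c] unfolding C_def by (simp add: order.antisym)
  have Cdia_id: "C c \<Longrightarrow> mc_dia c = c" for c
    using dia_iff[of c c] dia_ge[of c] unfolding C_def by (simp add: order.antisym sup_commute)
  have Cneg: "C c \<Longrightarrow> C (mc_neg c)" for c
  proof -
    assume "C c"
    have "c \<le> mc_neg (mc_neg c)" using negle neg0 by (simp add: inf_commute)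
    hence "sup (mc_neg c) c \<le> sup (mc_neg c) (mc_neg (mc_neg c))" by (simp add: sup.coboundedI2)
    thus ?thesis using \<open>C c\<close> unfolding C_def by (simp add: sup_commute top_unique)
  qed
  have p1: "mc_box (sup a c) = sup (mc_box a) c" if "C c" for a c
  proof (rule order.antisym)
    have "mc_box (sup a c) = inf (mc_box (sup a c)) (sup c (mc_neg c))" using that C_def by simp
    also have "\<dots> = sup (inf (mc_box (sup a c)) c) (inf (mc_box (sup a c)) (mc_neg c))"
      by (rule inf_sup_distrib1)
    also have "\<dots> \<le> sup c (inf (mc_box (sup a c)) (mc_box (mc_neg c)))"
      using Cbox_id[OF Cneg[OF that]] by (simp add: le_supI1 le_supI2)
    also have "\<dots> = sup c (mc_box (inf (sup a c) (mc_neg c)))" by (simp add: box_inf)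
    also have "inf (sup a c) (mc_neg c) = inf a (mc_neg c)"
      using neg0[of c] by (simp add: inf_sup_distrib2)
    also have "sup c (mc_box (inf a (mc_neg c))) \<le> sup (mc_box a) c"
      using box_mono[of "inf a (mc_neg c)" a] by (simp add: le_supI1 le_supI2 sup_commute)
    finally show "mc_box (sup a c) \<le> sup (mc_box a) c" .
    show "sup (mc_box a) c \<le> mc_box (sup a c)"
      using box_mono[of a "sup a c"] box_mono[of c "sup a c"] Cbox_id[OF that] by simp
  qed
  have p2: "mc_dia (inf a c) = inf (mc_dia a) c" if "C c" for a c
  proof (rule order.antisym)
    show "mc_dia (inf a c) \<le> inf (mc_dia a) c"
      using dia_mono[of "inf a c" a] dia_mono[of "inf a c" c] Cdia_id[OF that] by simp
    have "a = inf a (sup c (mc_neg c))" using that C_def by simp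
    also have "\<dots> = sup (inf a c) (inf a (mc_neg c))" by (rule inf_sup_distrib1)
    finally have ae: "a = sup (inf a c) (inf a (mc_neg c))" .
    have "mc_dia a = mc_dia (sup (inf a c) (inf a (mc_neg c)))" using ae by (rule arg_cong)
    also have "\<dots> = sup (mc_dia (inf a c)) (mc_dia (inf a (mc_neg c)))" by (rule dia_sup)
    also have "\<dots> \<le> sup (mc_dia (inf a c)) (mc_neg c)"
      using dia_mono[of "inf a (mc_neg c)" "mc_neg c"] Cdia_id[OF Cneg[OF that]]
      by (simp add: le_supI2)
    finally have "inf (mc_dia a) c \<le> inf (sup (mc_dia (inf a c)) (mc_neg c)) c"
      by (simp add: le_infI1)
    also have "\<dots> = inf (mc_dia (inf a c)) c"
      using neg0[of c] by (simp add: inf_sup_distrib1 inf_commute)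
    also have "\<dots> \<le> mc_dia (inf a c)" by simp
    finally show "inf (mc_dia a) c \<le> mc_dia (inf a c)" .
  qed
  show ?thesis
    using box_inf Cbox_id[OF Cdia] dia_sup Cdia_id[OF Cbox] p1[OF Cbox] p2[OF Cdia] by simp
qed

end
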